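(* Let $\mathcal H$ be a functional unit for $\mathbb S$ with $(\mathrm{dup},\mathrm{Dup})\in\mathcal H$, and let $I\subseteq IF(\mathcal H)$ with $\mathrm{dup}\in I$. Then there does not exist an $x\in\mathcal L_f(IF(\mathcal H))$ that produces a reflexive solution of the halting problem for $\mathcal L_f(I)$ with respect to $\mathcal H$.
   Context: Instruction sequences: Fix a symbol $f$ (the focus). For a set $I$ of method names, $\mathcal L_f(I)$ is the set of all finite sequences $u_1;\ldots;u_k$ ($k\ge1$) of primitive instructions, each of which is one of: $f.m$, $+f.m$, $-f.m$ with $m\in I$ (plain basic, positive test, negative test instruction); $\#l$ or $\backslash\#l$ with $l\in\mathbb N$ (forward / backward jump); $!t$ (positive termination); $!f$ (negative termination). Functional units: for a nonempty set $S$, a method operation on $S$ is a total function $M:S\to\{T,F\}\times S$. A functional unit for $S$ is a finite set $\mathcal H$ of pairs $(m,M)$ ($m$ a method name, $M$ a method operation on $S$) in which each method name occurs at most once; $IF(\mathcal H)$ is the set of method names occurring in $\mathcal H$, and $m_{\mathcal H}$ is the method operation paired with $m\in IF(\mathcal H)$. Execution: for $x=u_1;\ldots;u_k$, a functional unit $\mathcal H$ for $S$ and $s\in S$, the execution of $x$ on $\mathcal H(s)$ is the deterministic run through configurations $(i,t)$ (instruction position, current state) starting at $(1,s)$: if $i\notin\{1,\ldots,k\}$ the run stops without terminating (deadlock); if $u_i$ is $f.m$, $+f.m$ or $-f.m$ with $m\notin IF(\mathcal H)$ the run stops without terminating; otherwise, with $(b,t')=m_{\mathcal H}(t)$: $u_i=f.m$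 leads to $(i+1,t')$; $u_i=+f.m$ leads to $(i+1,t')$ if $b=T$ and to $(i+2,t')$ if $b=F$; $u_i=-f.m$ leads to $(i+2,t')$ if $b=T$ and to $(i+1,t')$ if $b=F$; $u_i=\#l$ leads to $(i+l,t)$; $u_i=\backslash\#l$ leads to $(i-l,t)$; $u_i=!t$ (resp. $!f$) makes the run terminate with value $T$ (resp. $F$) and final state $t$. We say $x$ converges on $\mathcal H(s)$, written $x\downarrow\mathcal H(s)$, if the run reaches $!t$ or $!f$ after finitely many steps; otherwise $x$ diverges on $\mathcal H(s)$, written $x\uparrow\mathcal H(s)$. The reply $\mathrm{rep}(x,\mathcal H(s))\in\{T,F,D\}$ is the termination value if $x\downarrow\mathcal H(s)$ and $D$ (divergent) otherwise. Tape states: $\mathbb S=\{v\triangleright w : v,w\in\{0,1,:\}^*\}$, formal pairs of strings over the alphabet $\{0,1,:\}$ (':' is the colon symbol, $\triangleright$ marks the head position); $\triangleright w$ denotes the state with empty left part and right part $w$, and juxtaposition denotes concatenation, so e.g. $\triangleright v:w$ has right part $v$, then a colon, then $w$. For each functional unit $\mathcal H$ for $\mathbb S$ a fixed injective encoding $x\mapsto\overline x$ from $\mathcal L_f(IF(\mathcal H))$ into $\{0,1\}^*$ is given. Duplication: $\mathrm{dup}$ is a method name and $\mathrm{Dup}$ is the method operation on $\mathbb S$ given by $\mathrm{Dup}(v\triangleright w)=\mathrm{Dup}(\triangleright vw)$; $\mathrm{Dup}(\triangleright v)=(T,\triangleright v:v)$ for $v\in\{0,1\}^*$; $\mathrm{Dup}(\triangleright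 v:w)=(T,\triangleright v:v:w)$ for $v\in\{0,1\}^*$, $w\in\{0,1,:\}^*$. Halting problem solutions: let $\mathcal H$ be a functional unit for $\mathbb S$ and $I\subseteq IF(\mathcal H)$. An $x\in\mathcal L_f(IF(\mathcal H))$ produces a solution of the halting problem for $\mathcal L_f(I)$ with respect to $\mathcal H$ if (i) $x\downarrow\mathcal H(s)$ for all $s\in\mathbb S$, and (ii) for all $y\in\mathcal L_f(I)$ and $v\in\{0,1,:\}^*$: $\mathrm{rep}(x,\mathcal H(\triangleright\overline y:v))=T$ iff $y\downarrow\mathcal H(\triangleright v)$. It produces a reflexive solution if moreover $x\in\mathcal L_f(I)$. *)

theory Defs
  imports Main
begin

section \<open>Instruction sequences (focus f is fixed and implicit)\<close>

datatype 'm instr =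
    Basic 'm
  | PosTest 'm
  | NegTest 'm
  | FJump nat
  | BJump nat
  | TermT
  | TermF

fun instr_methods :: "'m instr \<Rightarrow> 'm set" where
  "instr_methods (Basic m) = {m}"
| "instr_methods (PosTest m) = {m}"
| "instr_methods (NegTest m) = {m}"
| "instr_methods _ = {}"

definition L :: "'m set \<Rightarrow> 'm instr list set" where
  "L I = {x. x \<noteq> [] \<and> (\<forall>u\<in>set x. instr_methods u \<subseteq> I)}"

datatype sym = S0 | S1 | Colon

text \<open>A state v \<triangleright> w is the pair (v, w).\<close>
type_synonym tstate = "sym list \<times> sym list"

definition functional_unit :: "('m \<times> ('s \<Rightarrow> bool \<times> 's)) set \<Rightarrow> bool" where
  "functional_unit H \<longleftrightarrow> finite H \<and>
     (\<forall>m M M'. (m, M) \<in> H \<longrightarrow> (m, M') \<in> H \<longrightarrow> M = M')"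

definition IF :: "('m \<times> ('s \<Rightarrow> bool \<times> 's)) set \<Rightarrow> 'm set" where
  "IF H = fst ` H"

definition meth :: "('m \<times> ('s \<Rightarrow> bool \<times> 's)) set \<Rightarrow> 'm \<Rightarrow> 's \<Rightarrow> bool \<times> 's" where
  "meth H m = (THE M. (m, M) \<in> H)"

datatype 's conf = Cont nat 's | Halt bool 's | Stuck

definition step :: "'m instr list \<Rightarrow> ('m \<times> ('s \<Rightarrow> bool \<times> 's)) set \<Rightarrow> nat \<Rightarrow> 's \<Rightarrow> 's conf" where
  "step x H i t =
    (if i < 1 \<or> i > length x then Stuck else
     (case x ! (i - 1) of
        Basic m \<Rightarrow> if m \<notin> IF H then Stuck else
                      (case meth H m t of (b, t') \<Rightarrow> Cont (i + 1) t')
      | PosTest m \<Rightarrow> if m \<notin> IF H then Stuck else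
                      (case meth H m t of (b, t') \<Rightarrow> Cont (if b then i + 1 else i + 2) t')
      | NegTest m \<Rightarrow> if m \<notin> IF H then Stuck else
                      (case meth H m t of (b, t') \<Rightarrow> Cont (if b then i + 2 else i + 1) t')
      | FJump l \<Rightarrow> Cont (i + l) t
      | BJump l \<Rightarrow> (if l < i then Cont (i - l) t else Stuck)
      | TermT \<Rightarrow> Halt True t
      | TermF \<Rightarrow> Halt False t))"

fun run :: "'m instr list \<Rightarrow> ('m \<times> ('s \<Rightarrow> bool \<times> 's)) set \<Rightarrow> 's \<Rightarrow> nat \<Rightarrow> 's conf" where
  "run x H s 0 = Cont 1 s"
| "run x H s (Suc n) = (case run x H s n of Cont i t \<Rightarrow> step x H i t | c \<Rightarrow> c)"

definition converges :: "'m instr list \<Rightarrow> ('m \<times> ('s \<Rightarrow> bool \<times> 's)) set \<Rightarrow> 's \<Rightarrow> bool" where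
  "converges x H s \<longleftrightarrow> (\<exists>n b t. run x H s n = Halt b t)"

datatype reply = RT | RF | RD

definition rep :: "'m instr list \<Rightarrow> ('m \<times> ('s \<Rightarrow> bool \<times> 's)) set \<Rightarrow> 's \<Rightarrow> reply" where
  "rep x H s =
     (if \<exists>n t. run x H s n = Halt True t then RT
      else if \<exists>n t. run x H s n = Halt False t then RF
      else RD)"

definition Dup :: "tstate \<Rightarrow> bool \<times> tstate" where
  "Dup st = (let u = fst st @ snd st in
     if Colon \<notin> set u then (True, ([], u @ [Colon] @ u))
     else (True, ([], takeWhile (\<lambda>c. c \<noteq> Colon) u @ [Colon] @ u)))"

definition bits :: "bool list \<Rightarrow> sym list" where
  "bits w = map (\<lambda>b. if b then S1 else S0) w"

text \<open>enc is the fixed encoding x \<mapsto> overline x of L_f(IF H) into {0,1}^*.\<close>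
definition produces_solution ::
  "('m instr list \<Rightarrow> bool list) \<Rightarrow> ('m \<times> (tstate \<Rightarrow> bool \<times> tstate)) set \<Rightarrow> 'm set \<Rightarrow> 'm instr list \<Rightarrow> bool" where
  "produces_solution enc H I x \<longleftrightarrow>
     (\<forall>s. converges x H s) \<and>
     (\<forall>y\<in>L I. \<forall>v. rep x H ([], bits (enc y) @ [Colon] @ v) = RT \<longleftrightarrow> converges y H ([], v))"

definition produces_reflexive_solution ::
  "('m instr list \<Rightarrow> bool list) \<Rightarrow> ('m \<times> (tstate \<Rightarrow> bool \<times> tstate)) set \<Rightarrow> 'm set \<Rightarrow> 'm instr list \<Rightarrow> bool" where
  "produces_reflexive_solution enc H I x \<longleftrightarrow> produces_solution enc H I x \<and> x \<in> L I"

end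

theory Submission
  imports Defs
begin

fun g :: "nat \<Rightarrow> 'm instr \<Rightarrow> 'm instr" where
  "g k (BJump l) = (if l \<le> k then BJump l else FJump 0)"
| "g k TermT = FJump 0"
| "g k TermF = TermT"
| "g k u = u"

definition mky :: "'m \<Rightarrow> 'm instr list \<Rightarrow> 'm instr list" where
  "mky d x = Basic d # map (\<lambda>k. g k (x!k)) [0..<length x]"

lemma mky_len: "length (mky d x) = Suc (length x)"
  by (simp add: mky_def)

lemma mky_nth: "1 \<le> i \<Longrightarrow> i \<le> length x \<Longrightarrow> mky d x ! i = g (i-1) (x!(i-1))"
  by (cases i) (auto simp: mky_def)

lemma step_sim:
  assumes "step x H i t = Cont j t'"
  shows "step (mky d x) H (Suc i) t = Cont (Suc j) t'"
proof -
  have r: "1 \<le> i \<and> i \<le> length x" using assms by (auto simp: step_def split: if_splits)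
  hence n: "mky d x ! (Suc i - 1) = g (i-1) (x!(i-1))" using mky_nth[of i x d] by simp
  show ?thesis using assms r n
    by (cases "x!(i-1)") (auto simp: step_def mky_len split: if_splits prod.splits)
qed

lemma step_T:
  assumes "step x H i t = Halt True t'"
  shows "step (mky d x) H (Suc i) t = Cont (Suc i) t \<and> t' = t"
proof -
  have r: "1 \<le> i \<and> i \<le> length x" using assms by (auto simp: step_def split: if_splits)
  hence n: "mky d x ! (Suc i - 1) = g (i-1) (x!(i-1))" using mky_nth[of i x d] by simp
  show ?thesis using assms r n
    by (cases "x!(i-1)") (auto simp: step_def mky_len split: if_splits prod.splits)
qed

lemma step_F:
  assumes "step x H i t = Halt False t'"
  shows "step (mky d x) H (Suc i) t = Halt True t"
proof -
  have r: "1 \<le> i \<and> i \<le> length x" using assms by (auto simp: step_def split: if_splits)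
  hence n: "mky d x ! (Suc i - 1) = g (i-1) (x!(i-1))" using mky_nth[of i x d] by simp
  show ?thesis using assms r n
    by (cases "x!(i-1)") (auto simp: step_def mky_len split: if_splits prod.splits)
qed

lemma run_cont_prev: "run x H s (Suc n) = Cont i t \<Longrightarrow> \<exists>i' t'. run x H s n = Cont i' t'"
  by (cases "run x H s n") auto

lemma run_cont_le: "run x H s n = Cont i t \<Longrightarrow> m \<le> n \<Longrightarrow> \<exists>i' t'. run x H s m = Cont i' t'"
proof (induction n arbitrary: i t)
  case 0 thus ?case by simp
next
  case (Suc n)
  show ?case
  proof (cases "m = Suc n")
    case True thus ?thesis using Suc by auto
  next
    case False
    then obtain i' t' where "run x H s n = Cont i' t'" using run_cont_prev[OF Suc.prems(1)] by blast
    thus ?thesis using Suc False by auto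
  qed
qed

lemma run_first:
  assumes "(d, M) \<in> H" "functional_unit H"
  shows "run (mky d x) H s (Suc 0) = Cont 2 (snd (M s))"
proof -
  have m: "meth H d = M" using assms unfolding meth_def functional_unit_def by blast
  have "d \<in> IF H" using assms(1) unfolding IF_def by force
  thus ?thesis using m by (auto simp: step_def mky_def split: prod.splits)
qed

lemma run_sim:
  assumes "(d, M) \<in> H" "functional_unit H"
    and "run x H (snd (M s)) n = Cont i t"
  shows "run (mky d x) H s (Suc n) = Cont (Suc i) t"
  using assms(3)
proof (induction n arbitrary: i t)
  case 0 thus ?case using run_first[OF assms(1,2)] by simp
next
  case (Suc n)
  then obtain i' t' where c: "run x H (snd (M s)) n = Cont i' t'" using run_cont_prev[OF Suc.prems] by blast
  hence "step x H i' t' = Cont i t" using Suc.prems by simp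
  hence "step (mky d x) H (Suc i') t' = Cont (Suc i) t" by (rule step_sim)
  thus ?case using Suc.IH[OF c] by simp
qed

lemma halt_last: "run x H s n = Halt b t \<Longrightarrow> \<exists>m i t0. run x H s m = Cont i t0 \<and> step x H i t0 = Halt b t"
proof (induction n)
  case 0 thus ?case by simp
next
  case (Suc n) thus ?case by (cases "run x H s n") auto
qed

lemma loop_forever:
  assumes "run y H s n = Cont j t" "step y H j t = Cont j t"
  shows "run y H s (n + k) = Cont j t"
  using assms by (induction k) auto

lemma halt_T_diverge:
  assumes "(d, M) \<in> H" "functional_unit H"
    and "run x H (snd (M s)) n = Halt True t"
  shows "\<not> converges (mky d x) H s"
proof -
  obtain m i t0 where c: "run x H (snd (M s)) m = Cont i t0" and st: "step x H i t0 = Halt True t"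
    using halt_last[OF assms(3)] by blast
  have y1: "run (mky d x) H s (Suc m) = Cont (Suc i) t0" using run_sim[OF assms(1,2) c] .
  have lp: "step (mky d x) H (Suc i) t0 = Cont (Suc i) t0" using step_T[OF st] by simp
  have "\<exists>j u. run (mky d x) H s k = Cont j u" for k
  proof (cases "k \<le> Suc m")
    case True
    show ?thesis
    proof (cases k)
      case 0 thus ?thesis by simp
    next
      case (Suc k')
      then obtain i' t' where "run x H (snd (M s)) k' = Cont i' t'"
        using run_cont_le[OF c] True by fastforce
      thus ?thesis using run_sim[OF assms(1,2)] Suc by blast
    qed
  next
    case False
    then obtain q where "k = Suc m + q" by (metis le_add_diff_inverse nat_le_linear)
    thus ?thesis using loop_forever[OF y1 lp] by blast
  qed
  thus ?thesis unfolding converges_def by (metis conf.distinct(1))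
qed

lemma halt_F_conv:
  assumes "(d, M) \<in> H" "functional_unit H"
    and "run x H (snd (M s)) n = Halt False t"
  shows "converges (mky d x) H s"
proof -
  obtain m i t0 where c: "run x H (snd (M s)) m = Cont i t0" and st: "step x H i t0 = Halt False t"
    using halt_last[OF assms(3)] by blast
  have y1: "run (mky d x) H s (Suc m) = Cont (Suc i) t0" using run_sim[OF assms(1,2) c] .
  have "run (mky d x) H s (Suc (Suc m)) = Halt True t0" using y1 step_F[OF st] by simp
  thus ?thesis unfolding converges_def by blast
qed

lemma mky_L: "x \<in> L I \<Longrightarrow> d \<in> I \<Longrightarrow> mky d x \<in> L I"
proof -
  assume x: "x \<in> L I" and d: "d \<in> I"
  have "instr_methods (g k u) \<subseteq> instr_methods u" for k and u :: "'a instr"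
    by (cases u) auto
  thus ?thesis using x d unfolding L_def mky_def by (fastforce simp: in_set_conv_nth)
qed

theorem theorem4:
  fixes H :: "('m \<times> (tstate \<Rightarrow> bool \<times> tstate)) set"
    and I :: "'m set"
    and dup :: 'm
    and enc :: "'m instr list \<Rightarrow> bool list"
  assumes "functional_unit H"
    and "(dup, Dup) \<in> H"
    and "I \<subseteq> IF H"
    and "dup \<in> I"
    and "inj_on enc (L (IF H))"
  shows "\<not> (\<exists>x\<in>L (IF H). produces_reflexive_solution enc H I x)"
proof
  assume "\<exists>x\<in>L (IF H). produces_reflexive_solution enc H I x"
  then obtain x where xs: "produces_solution enc H I x" and xL: "x \<in> L I"
    unfolding produces_reflexive_solution_def by blast
  define y where "y = mky dup x"
  have yL: "y \<in> L I" using mky_L[OF xL assms(4)] y_def by simp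
  define v where "v = bits (enc y)"
  have nc: "Colon \<notin> set v" unfolding v_def bits_def by auto
  have ds: "snd (Dup ([], v)) = ([], v @ [Colon] @ v)" using nc by (simp add: Dup_def)
  have key: "rep x H ([], v @ [Colon] @ v) = RT \<longleftrightarrow> converges y H ([], v)"
    using xs yL unfolding produces_solution_def v_def by blast
  have conv: "converges x H ([], v @ [Colon] @ v)" using xs unfolding produces_solution_def by blast
  show False
  proof (cases "\<exists>n t. run x H ([], v @ [Colon] @ v) n = Halt True t")
    case True
    then obtain n t where "run x H (snd (Dup ([], v))) n = Halt True t" using ds by auto
    hence "\<not> converges y H ([], v)" using halt_T_diverge[OF assms(2,1)] y_def by blast
    moreover have "rep x H ([], v @ [Colon] @ v) = RT" using True by (simp add: rep_def)
    ultimately show False using key by blast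
  next
    case False
    then obtain n t where "run x H ([], v @ [Colon] @ v) n = Halt False t"
      using conv unfolding converges_def by (metis (full_types))
    hence "run x H (snd (Dup ([], v))) n = Halt False t" using ds by simp
    hence "converges y H ([], v)" using halt_F_conv[OF assms(2,1)] y_def by blast
    moreover have "rep x H ([], v @ [Colon] @ v) \<noteq> RT" using False by (simp add: rep_def)
    ultimately show False using key by blast
  qed
qed

end
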